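(* Let $\mathcal{M}\in\mathbb{R}^{N\times N}$ be a column-stochastic matrix ($\mathcal{M}_{i,j}\ge 0$, $\sum_{i=1}^N\mathcal{M}_{i,j}=1$ for every $j$) of an ergodic Markov chain, with eigenvectors $\mathbf{u_1},\ldots,\mathbf{u_N}$ forming a basis of $\mathbb{R}^N$ and eigenvalues $\lambda_1=1$, $|\lambda_j|<1$ for $j>1$, where $\mathbf{u_1}$ is the unique invariant probability vector ($\mathcal{M}\mathbf{u_1}=\mathbf{u_1}$, entries summing to $1$). Let $W=\operatorname{span}\{\mathbf{u_2},\ldots,\mathbf{u_N}\}$; then $1-\mathcal{M}$ maps $W$ bijectively onto $W$, and we write $(1-\mathcal{M})^{-1}$ for the inverse of its restriction to $W$ (equivalently $(1-\mathcal{M})^{-1}\mathbf{y}=\sum_{k=0}^\infty\mathcal{M}^k\mathbf{y}$ for $\mathbf{y}\in W$). Let $m\in\mathbb{R}^{N\times N}$, $m\neq 0$, satisfy $\sum_{i=1}^N m_{i,j}=0$ for all $j$ (so $m\mathbb{R}^N\subseteq W$). Define $\epsilon_+=\max\{\epsilon:\ \mathcal{M}_{i,j}+\epsilon m_{i,j}\geq 0\ \forall i,j\}$, $\epsilon_-=\min\{\epsilon:\ \mathcal{M}_{i,j}+\epsilon m_{i,j}\geq 0\ \forall i,j\}$, and $$\epsilon^*_{max}=\frac{1}{\|m\|_1\,\|(1-\mathcal{M})^{-1}\|^*_1},\qquad \|\mathcal{Q}\|^*_1=\sup_{\mathbf{v}\in W,\ \|\mathbf{v}\|_1=1}\|\mathcal{Q}\mathbf{v}\|_1,$$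 where $\|m\|_1$ is the operator norm induced by the $\ell^1$ norm. Then for every $\epsilon$ with $|\epsilon|<\epsilon^*_{max}$ and $\epsilon\in[\epsilon_-,\epsilon_+]$, the series $$\mathbf{v_1}=\mathbf{u_1}+\sum_{n=1}^\infty\epsilon^n\left((1-\mathcal{M})^{-1}m\right)^n\mathbf{u_1}$$ converges in $\ell^1$, and (assuming, as throughout, that the stochastic matrix $\mathcal{M}+\epsilon m$ has a unique invariant probability vector) $\mathbf{v_1}$ is the invariant measure of $\mathcal{M}+\epsilon m$, i.e. $(\mathcal{M}+\epsilon m)\mathbf{v_1}=\mathbf{v_1}$ with entries summing to $1$. Equivalently $\mathbf{v_1}=(1-\epsilon(1-\mathcal{M})^{-1}m)^{-1}\mathbf{u_1}$.
   Context: Column-vector convention: $\mathcal{M}_{i,j}$ is the probability of a transition from state $j$ to state $i$ in one step; probability vectors are column vectors in $\mathbb{R}^N$. For $\epsilon\in[\epsilon_-,\epsilon_+]$ the matrix $\mathcal{M}+\epsilon m$ is again column-stochastic. *)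

theory Defs
  imports "HOL-Analysis.Analysis"
begin

text \<open>Column-vector convention: M $ i $ j is the probability of a transition j to i.\<close>

definition l1norm :: "real ^ 'n \<Rightarrow> real" where
  "l1norm v = (\<Sum>i\<in>UNIV. \<bar>v $ i\<bar>)"

definition column_stochastic :: "real ^ 'n ^ 'n \<Rightarrow> bool" where
  "column_stochastic A \<longleftrightarrow> (\<forall>i j. A $ i $ j \<ge> 0) \<and> (\<forall>j. (\<Sum>i\<in>UNIV. A $ i $ j) = 1)"

definition prob_vector :: "real ^ 'n \<Rightarrow> bool" where
  "prob_vector p \<longleftrightarrow> (\<forall>i. p $ i \<ge> 0) \<and> (\<Sum>i\<in>UNIV. p $ i) = 1"

definition matpow :: "real ^ 'n ^ 'n \<Rightarrow> nat \<Rightarrow> real ^ 'n ^ 'n" where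
  "matpow A k = (((**) A) ^^ k) (mat 1)"

text \<open>Ergodic (irreducible and aperiodic) finite chain = primitive transition matrix.\<close>
definition ergodic :: "real ^ 'n ^ 'n \<Rightarrow> bool" where
  "ergodic A \<longleftrightarrow> (\<exists>k>0. \<forall>i j. matpow A k $ i $ j > 0)"

definition opnorm1 :: "real ^ 'n ^ 'n \<Rightarrow> real" where
  "opnorm1 A = Sup {l1norm (A *v v) | v. l1norm v = 1}"

definition resolvent_on :: "real ^ 'n ^ 'n \<Rightarrow> (real ^ 'n) set \<Rightarrow> real ^ 'n \<Rightarrow> real ^ 'n" where
  "resolvent_on M W y = (THE x. x \<in> W \<and> x - M *v x = y)"

definition opnorm1_on :: "(real ^ 'n \<Rightarrow> real ^ 'n) \<Rightarrow> (real ^ 'n) set \<Rightarrow> real" where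
  "opnorm1_on Q W = Sup {l1norm (Q v) | v. v \<in> W \<and> l1norm v = 1}"

definition nonneg_set :: "real ^ 'n ^ 'n \<Rightarrow> real ^ 'n ^ 'n \<Rightarrow> real set" where
  "nonneg_set M m = {e. \<forall>i j. M $ i $ j + e * m $ i $ j \<ge> 0}"

definition eps_plus :: "real ^ 'n ^ 'n \<Rightarrow> real ^ 'n ^ 'n \<Rightarrow> real" where
  "eps_plus M m = Sup (nonneg_set M m)"

definition eps_minus :: "real ^ 'n ^ 'n \<Rightarrow> real ^ 'n ^ 'n \<Rightarrow> real" where
  "eps_minus M m = Inf (nonneg_set M m)"

end

theory Submission
  imports Defs
begin


lemma l1norm_nonneg: "l1norm v \<ge> 0"
  unfolding l1norm_def by (simp add: sum_nonneg)

lemma norm_le_l1norm: "norm v \<le> l1norm v"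
  unfolding l1norm_def by (rule norm_le_l1_cart)

lemma l1norm_le_card: "l1norm (v::real^'n) \<le> real CARD('n) * norm v"
proof -
  have "l1norm v \<le> (\<Sum>i\<in>(UNIV::'n set). norm v)"
    unfolding l1norm_def by (rule sum_mono) (rule component_le_norm_cart)
  thus ?thesis by simp
qed

lemma l1norm_scale: "l1norm (c *\<^sub>R v) = \<bar>c\<bar> * l1norm v"
  unfolding l1norm_def by (simp add: abs_mult sum_distrib_left)

lemma l1norm_eq0: "l1norm v = 0 \<Longrightarrow> v = 0"
  using norm_le_l1norm[of v] by simp

lemma l1norm_zero[simp]: "l1norm 0 = 0"
  unfolding l1norm_def by simp

lemma colsum_mv: "(\<Sum>i\<in>UNIV. (A *v v) $ i) = (\<Sum>j\<in>UNIV. (\<Sum>i\<in>UNIV. A $ i $ j) * v $ j)"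
proof -
  have "(\<Sum>i\<in>UNIV. (A *v v) $ i) = (\<Sum>i\<in>UNIV. \<Sum>j\<in>UNIV. A $ i $ j * v $ j)"
    by (simp add: matrix_vector_mult_def)
  also have "\<dots> = (\<Sum>j\<in>UNIV. \<Sum>i\<in>UNIV. A $ i $ j * v $ j)" by (rule sum.swap)
  also have "\<dots> = (\<Sum>j\<in>UNIV. (\<Sum>i\<in>UNIV. A $ i $ j) * v $ j)" by (simp add: sum_distrib_right)
  finally show ?thesis .
qed

lemma bdd_l1:
  assumes "linear (f :: real^'n \<Rightarrow> real^'n)"
  shows "bdd_above {l1norm (f v) | v. P v \<and> l1norm v = 1}"
proof -
  obtain K where K: "K > 0" "\<And>x. norm (f x) \<le> K * norm x"
    using linear_bounded_pos[OF assms] by blast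
  have "l1norm (f v) \<le> real CARD('n) * K" if "l1norm v = 1" for v
  proof -
    have "l1norm (f v) \<le> real CARD('n) * norm (f v)" by (rule l1norm_le_card)
    also have "\<dots> \<le> real CARD('n) * (K * norm v)" using K(2)[of v] by (intro mult_left_mono) auto
    also have "\<dots> \<le> real CARD('n) * (K * 1)"
      using norm_le_l1norm[of v] that K(1) by (intro mult_left_mono) auto
    finally show ?thesis by simp
  qed
  thus ?thesis unfolding bdd_above_def by blast
qed

lemma bound_l1:
  assumes lin: "linear (f :: real^'n \<Rightarrow> real^'n)"
    and scl: "\<And>c v. P v \<Longrightarrow> P (c *\<^sub>R v)"
    and bdd: "bdd_above {l1norm (f v) | v. P v \<and> l1norm v = 1}"
    and Pw: "P w"
  shows "l1norm (f w) \<le> Sup {l1norm (f v) | v. P v \<and> l1norm v = 1} * l1norm w"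
proof (cases "w = 0")
  case True
  then show ?thesis using linear_0[OF lin] by simp
next
  case False
  define t where "t = l1norm w"
  have tpos: "t > 0" using False l1norm_eq0 l1norm_nonneg unfolding t_def
    by (metis less_eq_real_def)
  define v where "v = (1/t) *\<^sub>R w"
  have "l1norm v = 1" using tpos unfolding v_def l1norm_scale t_def by simp
  moreover have "P v" unfolding v_def by (rule scl[OF Pw])
  ultimately have "l1norm (f v) \<le> Sup {l1norm (f v) | v. P v \<and> l1norm v = 1}"
    by (intro cSup_upper[OF _ bdd]) blast
  moreover have "l1norm (f v) = l1norm (f w) / t"
    unfolding v_def linear_scale[OF lin] l1norm_scale using tpos by simp
  ultimately show ?thesis using tpos unfolding t_def[symmetric]
    by (simp add: divide_le_eq)
qed


theorem mainTheorem2: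
  fixes M m :: "real ^ 'n ^ 'n"
    and u :: "'n \<Rightarrow> real ^ 'n" and lam :: "'n \<Rightarrow> real" and j1 :: 'n
    and W :: "(real ^ 'n) set" and \<epsilon> :: real
  assumes stoch: "column_stochastic M"
    and erg: "ergodic M"
    and indep: "independent (range u)" and inj: "inj u"
    and spans: "span (range u) = UNIV"
    and eig: "\<And>k. M *v u k = lam k *\<^sub>R u k"
    and lam1: "lam j1 = 1"
    and lamk: "\<And>k. k \<noteq> j1 \<Longrightarrow> \<bar>lam k\<bar> < 1"
    and u1: "prob_vector (u j1)"
    and W_def: "W = span (u ` (UNIV - {j1}))"
    and m_nz: "m \<noteq> 0"
    and m_cols: "\<And>j. (\<Sum>i\<in>UNIV. m $ i $ j) = 0"
    and eps_small: "\<bar>\<epsilon>\<bar> < 1 / (opnorm1 m * opnorm1_on (resolvent_on M W) W)"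
    and eps_range: "eps_minus M m \<le> \<epsilon>" "\<epsilon> \<le> eps_plus M m"
    and uniq: "\<exists>!p. prob_vector p \<and> (M + \<epsilon> *\<^sub>R m) *v p = p"
  shows "\<exists>v1. (\<lambda>K. l1norm (u j1 + (\<Sum>n\<in>{1..K}. \<epsilon> ^ n *\<^sub>R
                  (((\<lambda>x. resolvent_on M W (m *v x)) ^^ n) (u j1))) - v1)) \<longlonglongrightarrow> 0
            \<and> (M + \<epsilon> *\<^sub>R m) *v v1 = v1 \<and> prob_vector v1"
proof -
  define s :: "real^'n \<Rightarrow> real" where "s v = (\<Sum>i\<in>UNIV. v $ i)" for v
  have linS: "linear s" unfolding s_def by (intro linearI) (auto simp: sum.distrib sum_distrib_left)
  have sM: "s (M *v v) = s v" for v
    using stoch unfolding s_def colsum_mv column_stochastic_def by simp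
  have sm: "s (m *v v) = 0" for v
    unfolding s_def colsum_mv m_cols by simp
  have lamne: "lam k \<noteq> 1" if "k \<noteq> j1" for k using lamk[OF that] by auto
  have su: "s (u k) = (if k = j1 then 1 else 0)" for k
  proof (cases "k = j1")
    case True then show ?thesis using u1 unfolding prob_vector_def s_def by simp
  next
    case False
    have "s (u k) = lam k * s (u k)" using sM[of "u k"] eig[of k] linear_scale[OF linS] by simp
    then show ?thesis using False lamne[OF False] by (auto simp: algebra_simps)
  qed
  have Wsub: "s w = 0" if "w \<in> W" for w
  proof -
    have "s w = (\<lambda>_. 0) w"
      by (rule linear_eq_on[OF linS linear_zero that[unfolded W_def]]) (auto simp: su split: if_splits)
    then show ?thesis by simp
  qed
  have sW: "v \<in> W" if "s v = 0" for v
  proof -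
    have "v \<in> range (\<lambda>c. \<Sum>x\<in>range u. c x *\<^sub>R x)"
      using span_finite[of "range u"] spans by simp
    then obtain c where c: "v = (\<Sum>x\<in>range u. c x *\<^sub>R x)" by blast
    define c' where "c' k = c (u k)" for k
    have v: "v = (\<Sum>k\<in>UNIV. c' k *\<^sub>R u k)"
      unfolding c c'_def using sum.reindex[OF inj, of "\<lambda>x. c x *\<^sub>R x"] by simp
    have "s v = (\<Sum>k\<in>UNIV. c' k * s (u k))"
      unfolding v linear_sum[OF linS] linear_scale[OF linS] by simp
    also have "\<dots> = c' j1" unfolding su by (simp add: if_distrib cong: if_cong)
    finally have "c' j1 = 0" using that by simp
    have "v = c' j1 *\<^sub>R u j1 + (\<Sum>k\<in>UNIV - {j1}. c' k *\<^sub>R u k)"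
      unfolding v by (simp add: sum.remove[of UNIV j1])
    also have "\<dots> = (\<Sum>k\<in>UNIV - {j1}. c' k *\<^sub>R u k)" using \<open>c' j1 = 0\<close> by simp
    also have "\<dots> \<in> W" unfolding W_def
      by (intro span_sum span_scale span_base) auto
    finally show ?thesis .
  qed
  define fL where "fL x = (let k = inv u x in if k = j1 then 0 else (1 / (1 - lam k)) *\<^sub>R x)" for x
  obtain L where linL: "linear L" and Lu: "\<forall>x\<in>range u. L x = fL x"
    using linear_independent_extend[OF indep] by blast
  have Luk: "L (u k) = (1 / (1 - lam k)) *\<^sub>R u k" if "k \<noteq> j1" for k
    using Lu that inj unfolding fL_def by (simp add: inv_f_f)
  have linMv: "linear (\<lambda>x. M *v x)" by (rule matrix_vector_mul_linear)
  have ekey: "(1/(1-lam k)) *\<^sub>R u k - lam k *\<^sub>R ((1/(1-lam k)) *\<^sub>R u k) = u k" if "k \<noteq> j1" for k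
  proof -
    have ne: "1 - lam k \<noteq> 0" using lamne[OF that] by simp
    have c: "(1/(1-lam k)) - lam k * (1/(1-lam k)) = 1" using ne by (simp add: field_simps)
    have "(1/(1-lam k)) *\<^sub>R u k - lam k *\<^sub>R ((1/(1-lam k)) *\<^sub>R u k)
        = ((1/(1-lam k)) - lam k * (1/(1-lam k))) *\<^sub>R u k"
      by (simp add: scaleR_diff_left)
    then show ?thesis using c by simp
  qed
  have linGL: "linear (\<lambda>w. L w - M *v L w)"
    by (intro linear_compose_sub linL linear_compose[OF linL linMv, unfolded o_def])
  have GL: "L w - M *v L w = w" if "w \<in> W" for w
  proof -
    have "(\<lambda>w. L w - M *v L w) w = id w"
    proof (rule linear_eq_on[OF linGL linear_id that[unfolded W_def]])
      fix b assume "b \<in> u ` (UNIV - {j1})"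
      then obtain k where k: "k \<noteq> j1" "b = u k" by auto
      have "1 - lam k \<noteq> 0" using lamne[OF k(1)] by simp
      show "L b - M *v L b = id b" using k Luk[OF k(1)] ekey[OF k(1)]
        by (simp add: linear_scale[OF linMv] eig)
    qed
    then show ?thesis by simp
  qed
  have linLI: "linear (\<lambda>w. L (w - M *v w))"
    by (intro linear_compose[OF _ linL, unfolded o_def] linear_compose_sub linear_id[unfolded id_def] linMv)
  have LI: "L (w - M *v w) = w" if "w \<in> W" for w
  proof -
    have "(\<lambda>w. L (w - M *v w)) w = id w"
    proof (rule linear_eq_on[OF linLI linear_id that[unfolded W_def]])
      fix b assume "b \<in> u ` (UNIV - {j1})"
      then obtain k where k: "k \<noteq> j1" "b = u k" by auto
      have "1 - lam k \<noteq> 0" using lamne[OF k(1)] by simp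
      show "L (b - M *v b) = id b" using k Luk[OF k(1)] ekey[OF k(1)]
        by (simp add: eig linear_diff[OF linL] linear_scale[OF linL])
    qed
    then show ?thesis by simp
  qed
  have LW: "L w \<in> W" if "w \<in> W" for w
  proof -
    have "L ` W = span (L ` (u ` (UNIV - {j1})))"
      unfolding W_def by (rule span_linear_image[OF linL, symmetric])
    also have "\<dots> \<subseteq> W"
    proof -
      have "L ` (u ` (UNIV - {j1})) \<subseteq> span (u ` (UNIV - {j1}))"
      proof
        fix y assume "y \<in> L ` (u ` (UNIV - {j1}))"
        then obtain k where k: "k \<noteq> j1" "y = L (u k)" by auto
        have "u k \<in> span (u ` (UNIV - {j1}))" using k(1) by (intro span_base) auto
        then show "y \<in> span (u ` (UNIV - {j1}))" using Luk[OF k(1)] k(2)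
          by (simp add: span_scale)
      qed
      then show ?thesis unfolding W_def by (intro span_minimal subspace_span)
    qed
    finally show ?thesis using that by blast
  qed
  have RL: "resolvent_on M W w = L w" if "w \<in> W" for w
    unfolding resolvent_on_def
  proof (rule the_equality)
    show "L w \<in> W \<and> L w - M *v L w = w" using LW GL that by auto
  next
    fix x assume "x \<in> W \<and> x - M *v x = w"
    then show "x = L w" using LI by force
  qed
  have mW: "m *v x \<in> W" for x using sW sm by blast
  define A where "A = opnorm1 m"
  define B where "B = opnorm1_on (resolvent_on M W) W"
  have linMm: "linear (\<lambda>x. m *v x)" by (rule matrix_vector_mul_linear)
  have bddA: "bdd_above {l1norm (m *v v) | v. True \<and> l1norm v = 1}" by (rule bdd_l1[OF linMm])
  have boundA: "l1norm (m *v x) \<le> A * l1norm x" for x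
    using bound_l1[OF linMm _ bddA, of x] unfolding A_def opnorm1_def by simp
  have setB: "{l1norm (resolvent_on M W v) | v. v \<in> W \<and> l1norm v = 1}
      = {l1norm (L v) | v. v \<in> W \<and> l1norm v = 1}" using RL by metis
  have Wscale: "c *\<^sub>R v \<in> W" if "v \<in> W" for c v using that unfolding W_def by (rule span_scale)
  have bddB: "bdd_above {l1norm (L v) | v. v \<in> W \<and> l1norm v = 1}" by (rule bdd_l1[OF linL])
  have boundB: "l1norm (L w) \<le> B * l1norm w" if "w \<in> W" for w
    using bound_l1[OF linL Wscale bddB that] unfolding B_def opnorm1_on_def setB by simp
  obtain j0 :: 'n where True by blast
  have "l1norm (axis j0 (1::real)) = 1"
    unfolding l1norm_def axis_def by (simp add: if_distrib cong: if_cong)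
  then have mem: "l1norm (m *v axis j0 1) \<in> {l1norm (m *v v) |v. l1norm v = 1}" by blast
  have "A \<ge> 0" unfolding A_def opnorm1_def
    by (rule cSup_upper2[OF mem l1norm_nonneg bddA[simplified]])
  have ABpos: "A * B > 0"
  proof (rule ccontr)
    assume "\<not> A * B > 0"
    then have "1 / (A * B) \<le> 0" by (simp add: divide_nonpos_nonneg, linarith?)
    then show False using eps_small unfolding A_def B_def by linarith
  qed
  have "B > 0" using ABpos \<open>A \<ge> 0\<close> by (metis less_eq_real_def mult_zero_left not_less zero_less_mult_pos)
  define r where "r = \<bar>\<epsilon>\<bar> * (A * B)"
  have r1: "r < 1" using eps_small ABpos unfolding r_def A_def[symmetric] B_def[symmetric]
    by (simp add: less_divide_eq)
  have r0: "r \<ge> 0" unfolding r_def using ABpos by simp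
  have boundT: "l1norm (L (m *v x)) \<le> A * B * l1norm x" for x
  proof -
    have "l1norm (L (m *v x)) \<le> B * l1norm (m *v x)" by (rule boundB[OF mW])
    also have "\<dots> \<le> B * (A * l1norm x)" using boundA \<open>B > 0\<close> by (intro mult_left_mono) auto
    finally show ?thesis by (simp add: algebra_simps)
  qed
  define T where "T = (\<lambda>x. resolvent_on M W (m *v x))"
  define a where "a n = (T ^^ n) (u j1)" for n
  have a0: "a 0 = u j1" unfolding a_def by simp
  have aS: "a (Suc n) = L (m *v a n)" for n
    unfolding a_def T_def using RL[OF mW] by simp
  have l1u: "l1norm (u j1) = 1"
    using u1 unfolding prob_vector_def l1norm_def by simp
  have abound: "l1norm (a n) \<le> (A * B) ^ n" for n
  proof (induction n)
    case 0 then show ?case using a0 l1u by simp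
  next
    case (Suc n)
    have "l1norm (a (Suc n)) \<le> A * B * l1norm (a n)" unfolding aS by (rule boundT)
    also have "\<dots> \<le> A * B * (A * B) ^ n" using Suc ABpos by (intro mult_left_mono) auto
    finally show ?case by simp
  qed
  define b where "b n = \<epsilon> ^ n *\<^sub>R a n" for n
  have bnorm: "norm (b n) \<le> r ^ n" for n
  proof -
    have "norm (b n) \<le> l1norm (b n)" by (rule norm_le_l1norm)
    also have "\<dots> = \<bar>\<epsilon>\<bar> ^ n * l1norm (a n)" unfolding b_def l1norm_scale by (simp add: power_abs)
    also have "\<dots> \<le> \<bar>\<epsilon>\<bar> ^ n * (A * B) ^ n" using abound by (intro mult_left_mono) auto
    also have "\<dots> = r ^ n" unfolding r_def by (simp add: power_mult_distrib)
    finally show ?thesis .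
  qed
  have summ: "summable b"
    by (rule summable_comparison_test'[OF summable_geometric bnorm]) (use r0 r1 in auto)
  define v1 where "v1 = suminf b"
  have bs: "b sums v1" unfolding v1_def using summ by (rule summable_sums)
  have pseq: "u j1 + (\<Sum>n\<in>{1..K}. \<epsilon> ^ n *\<^sub>R
                  (((\<lambda>x. resolvent_on M W (m *v x)) ^^ n) (u j1))) = (\<Sum>n<Suc K. b n)" for K
  proof -
    have "(\<Sum>n<Suc K. b n) = (\<Sum>n\<in>{0..K}. b n)" by (simp add: lessThan_Suc_atMost atLeast0AtMost)
    also have "\<dots> = b 0 + (\<Sum>n\<in>{Suc 0..K}. b n)" by (rule sum.atLeast_Suc_atMost) simp
    finally show ?thesis unfolding b_def a_def T_def by simp
  qed
  have lim1: "(\<lambda>K. \<Sum>n<Suc K. b n) \<longlonglongrightarrow> v1"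
    using bs unfolding sums_def by (rule LIMSEQ_Suc)
  have lim2: "(\<lambda>K. real CARD('n) * norm ((\<Sum>n<Suc K. b n) - v1)) \<longlonglongrightarrow> 0"
    by (intro tendsto_mult_right_zero tendsto_norm_zero LIM_zero lim1)
  have conv: "(\<lambda>K. l1norm ((\<Sum>n<Suc K. b n) - v1)) \<longlonglongrightarrow> 0"
    by (rule tendsto_sandwich[OF _ _ tendsto_const lim2]) (auto intro!: always_eventually allI l1norm_nonneg l1norm_le_card)
  define f where "f x = x - M *v x" for x
  have linf: "linear f" unfolding f_def
    by (intro linear_compose_sub linear_id[unfolded id_def] linMv)
  have blf: "bounded_linear f" using linf by (simp add: linear_conv_bounded_linear)
  have fbS: "f (b (Suc n)) = \<epsilon> *\<^sub>R (m *v b n)" for n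
  proof -
    have "f (b (Suc n)) = \<epsilon> ^ Suc n *\<^sub>R f (L (m *v a n))"
      unfolding b_def aS linear_scale[OF linf] by simp
    also have "f (L (m *v a n)) = m *v a n" unfolding f_def by (rule GL[OF mW])
    finally show ?thesis unfolding b_def linear_scale[OF linMm] by simp
  qed
  have s1: "(\<lambda>n. b (Suc n)) sums (v1 - b 0)" using bs by (simp add: sums_Suc_iff)
  have s2: "(\<lambda>n. f (b (Suc n))) sums f (v1 - b 0)" by (rule bounded_linear.sums[OF blf s1])
  have blm: "bounded_linear (\<lambda>x. \<epsilon> *\<^sub>R (m *v x))"
  proof -
    have "bounded_linear (\<lambda>x. m *v x)" using linMm by (simp add: linear_conv_bounded_linear)
    then show ?thesis by (rule bounded_linear_compose[OF bounded_linear_scaleR_right])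
  qed
  have s3: "(\<lambda>n. \<epsilon> *\<^sub>R (m *v b n)) sums (\<epsilon> *\<^sub>R (m *v v1))"
    by (rule bounded_linear.sums[OF blm bs])
  have "f (v1 - b 0) = \<epsilon> *\<^sub>R (m *v v1)" using s2 s3 unfolding fbS by (rule sums_unique2)
  moreover have "f (b 0) = 0" unfolding b_def a0 f_def using eig[of j1] lam1 by simp
  ultimately have fv1: "v1 - M *v v1 = \<epsilon> *\<^sub>R (m *v v1)"
    unfolding linear_diff[OF linf] by (simp add: f_def)
  have inv: "(M + \<epsilon> *\<^sub>R m) *v v1 = v1"
    using fv1 by (simp add: matrix_vector_mult_add_rdistrib scaleR_matrix_vector_assoc[symmetric] algebra_simps)
  have bls: "bounded_linear s" using linS by (simp add: linear_conv_bounded_linear)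
  have sb: "s (b n) = (if n = 0 then 1 else 0)" for n
  proof (cases n)
    case 0 then show ?thesis using su[of j1] by (simp add: b_def a0)
  next
    case (Suc k)
    have "s (a n) = 0" unfolding Suc aS by (rule Wsub[OF LW[OF mW]])
    then show ?thesis unfolding b_def linear_scale[OF linS] using Suc by simp
  qed
  have "(\<lambda>n. s (b n)) sums s v1" by (rule bounded_linear.sums[OF bls bs])
  moreover have "(\<lambda>n. s (b n)) sums 1" unfolding sb using sums_single[of 0 "\<lambda>_. 1::real"] by simp
  ultimately have sv1: "s v1 = 1" by (rule sums_unique2)
  obtain p where p: "prob_vector p" "(M + \<epsilon> *\<^sub>R m) *v p = p" using uniq by blast
  define d where "d = p - v1"
  have sp: "s p = 1" using p(1) unfolding prob_vector_def s_def by simp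
  have "s d = 0" unfolding d_def linear_diff[OF linS] sp sv1 by simp
  then have dW: "d \<in> W" by (rule sW)
  have "(M + \<epsilon> *\<^sub>R m) *v d = d" unfolding d_def
    using p(2) inv by (simp add: matrix_vector_mult_diff_distrib)
  then have "d - M *v d = \<epsilon> *\<^sub>R (m *v d)"
    by (simp add: matrix_vector_mult_add_rdistrib scaleR_matrix_vector_assoc[symmetric] algebra_simps)
  then have "d = L (\<epsilon> *\<^sub>R (m *v d))" using LI[OF dW] by simp
  then have deq: "d = \<epsilon> *\<^sub>R L (m *v d)" by (simp add: linear_scale[OF linL])
  have "l1norm d = \<bar>\<epsilon>\<bar> * l1norm (L (m *v d))"
    using arg_cong[OF deq, of l1norm] l1norm_scale[of \<epsilon> "L (m *v d)"] by (rule trans)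
  also have "\<dots> \<le> \<bar>\<epsilon>\<bar> * (A * B * l1norm d)" by (intro mult_left_mono boundT) auto
  finally have "l1norm d \<le> r * l1norm d" unfolding r_def by (simp add: algebra_simps)
  then have "(1 - r) * l1norm d \<le> 0" by (simp add: algebra_simps)
  moreover have "1 - r > 0" using r1 by simp
  ultimately have "l1norm d \<le> 0" by (simp add: mult_le_0_iff)
  then have "l1norm d = 0" using l1norm_nonneg[of d] by simp
  then have "d = 0" by (rule l1norm_eq0)
  then have "v1 = p" unfolding d_def by simp
  show ?thesis
    by (intro exI[of _ v1] conjI inv) (use conv pseq \<open>v1 = p\<close> p(1) in auto)
qed

end
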